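(* Let $X$ be an admissible complete CAT(1) space and $T\colon X\to X$ a firmly vicinal mapping. If $\mathrm{Fix}(T)$ is nonempty, then for each $x\in X$ the sequence $\{T^nx\}$ is $\Delta$-convergent to an element of $\mathrm{Fix}(T)$.
   Context: A CAT(1) space is a $\pi$-geodesic metric space in which every geodesic triangle of perimeter $<2\pi$ satisfies the CAT(1) comparison inequality relative to comparison triangles in the unit sphere $\mathbb S^2$; it is admissible if $d(v,v')<\pi/2$ for all $v,v'$. The asymptotic center of $\{x_n\}$ is $\mathrm{AC}(\{x_n\})=\{z:\limsup_n d(x_n,z)=\inf_{y}\limsup_n d(x_n,y)\}$; $\{x_n\}$ is $\Delta$-convergent to $p$ if $\mathrm{AC}(\{x_{n_i}\})=\{p\}$ for every subsequence $\{x_{n_i}\}$. With $C_z=\cos d(Tz,z)$, $T$ is firmly vicinal if for all $x,y\in X$: $\bigl(C_x^2(1+C_y^2)C_y+C_y^2(1+C_x^2)C_x\bigr)\cos d(Tx,Ty)\ge C_x^2(1+C_y^2)\cos d(Tx,y)+C_y^2(1+C_x^2)\cos d(Ty,x)$. *)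

theory Defs
  imports "HOL-Analysis.Analysis"
begin

definition S2 :: "(real^3) set" where
  "S2 = {u. norm u = 1}"

definition sdist :: "real^3 \<Rightarrow> real^3 \<Rightarrow> real" where
  "sdist u v = arccos (u \<bullet> v)"

definition geodesic_in :: "'a::metric_space set \<Rightarrow> (real \<Rightarrow> 'a) \<Rightarrow> 'a \<Rightarrow> 'a \<Rightarrow> bool" where
  "geodesic_in X g x y \<longleftrightarrow>
     g 0 = x \<and> g (dist x y) = y \<and> (\<forall>s\<in>{0..dist x y}. g s \<in> X) \<and>
     (\<forall>s\<in>{0..dist x y}. \<forall>t\<in>{0..dist x y}. dist (g s) (g t) = \<bar>s - t\<bar>)"

definition pi_geodesic :: "'a::metric_space set \<Rightarrow> bool" where
  "pi_geodesic X \<longleftrightarrow> (\<forall>x\<in>X. \<forall>y\<in>X. dist x y < pi \<longrightarrow> (\<exists>g. geodesic_in X g x y))"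

definition comp_point :: "real^3 \<Rightarrow> real^3 \<Rightarrow> real \<Rightarrow> real^3 \<Rightarrow> bool" where
  "comp_point u' v' t p' \<longleftrightarrow> p' \<in> S2 \<and> sdist u' p' = t \<and> sdist p' v' = sdist u' v' - t"

definition cat1_inequality :: "'a::metric_space set \<Rightarrow> bool" where
  "cat1_inequality X \<longleftrightarrow>
    (\<forall>a b c gab gbc gca.
       a \<in> X \<and> b \<in> X \<and> c \<in> X \<and>
       geodesic_in X gab a b \<and> geodesic_in X gbc b c \<and> geodesic_in X gca c a \<and>
       dist a b + dist b c + dist c a < 2 * pi \<longrightarrow>
       (\<forall>a' b' c'. a' \<in> S2 \<and> b' \<in> S2 \<and> c' \<in> S2 \<and>
          sdist a' b' = dist a b \<and> sdist b' c' = dist b c \<and> sdist c' a' = dist c a \<longrightarrow>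
          (let sides = {(gab, a', b', dist a b), (gbc, b', c', dist b c), (gca, c', a', dist c a)}
           in \<forall>(g, u', v', l) \<in> sides. \<forall>(h, w', z', m) \<in> sides.
                \<forall>s\<in>{0..l}. \<forall>t\<in>{0..m}. \<forall>p' q'.
                  comp_point u' v' s p' \<and> comp_point w' z' t q' \<longrightarrow>
                  dist (g s) (h t) \<le> sdist p' q')))"

definition CAT1 :: "'a::metric_space set \<Rightarrow> bool" where
  "CAT1 X \<longleftrightarrow> pi_geodesic X \<and> cat1_inequality X"

definition admissible :: "'a::metric_space set \<Rightarrow> bool" where
  "admissible X \<longleftrightarrow> (\<forall>v\<in>X. \<forall>v'\<in>X. dist v v' < pi / 2)"

definition asymptotic_center :: "'a::metric_space set \<Rightarrow> (nat \<Rightarrow> 'a) \<Rightarrow> 'a set" where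
  "asymptotic_center X xs =
     {z \<in> X. limsup (\<lambda>n. ereal (dist (xs n) z)) =
             (INF y\<in>X. limsup (\<lambda>n. ereal (dist (xs n) y)))}"

definition Delta_convergent :: "'a::metric_space set \<Rightarrow> (nat \<Rightarrow> 'a) \<Rightarrow> 'a \<Rightarrow> bool" where
  "Delta_convergent X xs p \<longleftrightarrow>
     (\<forall>r::nat \<Rightarrow> nat. strict_mono r \<longrightarrow> asymptotic_center X (xs \<circ> r) = {p})"

definition firmly_vicinal :: "'a::metric_space set \<Rightarrow> ('a \<Rightarrow> 'a) \<Rightarrow> bool" where
  "firmly_vicinal X T \<longleftrightarrow>
    (\<forall>x\<in>X. \<forall>y\<in>X.
      (let Cx = cos (dist (T x) x); Cy = cos (dist (T y) y) in
        (Cx^2 * (1 + Cy^2) * Cy + Cy^2 * (1 + Cx^2) * Cx) * cos (dist (T x) (T y))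
        \<ge> Cx^2 * (1 + Cy^2) * cos (dist (T x) y) + Cy^2 * (1 + Cx^2) * cos (dist (T y) x)))"

definition Fix :: "'a set \<Rightarrow> ('a \<Rightarrow> 'a) \<Rightarrow> 'a set" where
  "Fix X T = {z \<in> X. T z = z}"

end

theory Submission
  imports Defs
begin


lemma inner3: "(vector [a,b,c] :: real^3) \<bullet> vector [d,e,f] = a*d+b*e+c*f"
  by (simp add: inner_vec_def sum_3 vector_3)

lemma S2I: "(x::real^3) \<bullet> x = 1 \<Longrightarrow> x \<in> S2"
  by (simp add: S2_def norm_eq_sqrt_inner)

lemma sph_k:
  assumes "0 \<le> d" "d < pi/2" "0 \<le> b" "b < pi/2" "0 \<le> g" "g < pi/2"
    "g \<le> d + b" "d \<le> b + g" "b \<le> d + g"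
  shows "\<exists>k. -1 \<le> k \<and> k \<le> 1 \<and> cos g = cos d * cos b + sin d * sin b * k"
proof (cases "d = 0 \<or> b = 0")
  case True
  then show ?thesis
  proof
    assume "d = 0" hence "g = b" using assms by auto
    thus ?thesis using \<open>d = 0\<close> by (intro exI[of _ 0]) auto
  next
    assume "b = 0" hence "g = d" using assms by auto
    thus ?thesis using \<open>b = 0\<close> by (intro exI[of _ 0]) auto
  qed
next
  case False
  have sd: "sin d > 0" using False assms by (intro sin_gt_zero) auto
  have sb: "sin b > 0" using False assms by (intro sin_gt_zero) auto
  define k where "k = (cos g - cos d * cos b) / (sin d * sin b)"
  have eq: "cos g = cos d * cos b + sin d * sin b * k" using sd sb by (simp add: k_def field_simps)
  have "cos (d + b) \<le> cos g" using assms by (intro cos_monotone_0_pi_le) auto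
  hence "sin d * sin b * (-1) \<le> sin d * sin b * k" using eq by (simp add: cos_add)
  hence k1: "-1 \<le> k" using mult_le_cancel_left_pos[OF mult_pos_pos[OF sd sb]] by blast
  have "cos g \<le> cos \<bar>d - b\<bar>" using assms by (intro cos_monotone_0_pi_le) auto
  also have "cos \<bar>d - b\<bar> = cos (d - b)" by (metis abs_minus_commute abs_of_nonneg abs_of_nonpos cos_minus minus_diff_eq linorder_le_cases diff_ge_0_iff_ge diff_le_0_iff_le)
  finally have "sin d * sin b * k \<le> sin d * sin b * 1" using eq by (simp add: cos_diff)
  hence "k \<le> 1" using mult_le_cancel_left_pos[OF mult_pos_pos[OF sd sb]] by blast
  with k1 eq show ?thesis by blast
qed

lemma cos_arccos_ge:
  assumes "0 \<le> x" "x \<le> pi" "x \<le> arccos t" "-1 \<le> t" "t \<le> 1"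
  shows "t \<le> cos x"
proof -
  have "cos (arccos t) \<le> cos x" using assms arccos_lbound arccos_ubound
    by (intro cos_monotone_0_pi_le) auto
  thus ?thesis using assms by simp
qed

lemma midpoint_ineq:
  assumes cat: "CAT1 X" and adm: "admissible X" and u: "u\<in>X" and v: "v\<in>X"
  shows "\<exists>m\<in>X. \<forall>z\<in>X. cos (dist u z) + cos (dist v z) \<le> 2*cos(dist u v/2) * cos (dist m z)"
proof -
  have pg: "pi_geodesic X" and ci: "cat1_inequality X" using cat by (auto simp: CAT1_def)
  have dX: "\<And>a b. a\<in>X \<Longrightarrow> b\<in>X \<Longrightarrow> dist a b < pi/2" using adm by (auto simp: admissible_def)
  have geo: "\<And>a b. a\<in>X \<Longrightarrow> b\<in>X \<Longrightarrow> \<exists>g. geodesic_in X g a b"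
  proof -
    fix a b assume "a\<in>X" "b\<in>X"
    moreover have "dist a b < pi" using dX[OF \<open>a\<in>X\<close> \<open>b\<in>X\<close>] pi_gt_zero by linarith
    ultimately show "\<exists>g. geodesic_in X g a b" using pg unfolding pi_geodesic_def by blast
  qed
  obtain g where g: "geodesic_in X g u v" using geo[OF u v] by blast
  have mX: "g (dist u v/2) \<in> X" using g by (auto simp: geodesic_in_def)
  show ?thesis
  proof (intro bexI[OF _ mX] ballI)
    fix z assume z: "z\<in>X"
    obtain h1 where h1: "geodesic_in X h1 v z" using geo[OF v z] by blast
    obtain h2 where h2: "geodesic_in X h2 z u" using geo[OF z u] by blast
    have per: "dist u v + dist v z + dist z u < 2 * pi"
      using dX[OF u v] dX[OF v z] dX[OF z u] pi_gt_zero by linarith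
    obtain k where k: "-1 \<le> k" "k \<le> 1"
      "cos (dist v z) = cos (dist u v) * cos (dist z u) + sin (dist u v) * sin (dist z u) * k"
      using sph_k[of "dist u v" "dist z u" "dist v z"] dX[OF u v] dX[OF v z] dX[OF z u]
        dist_triangle[of v z u] dist_triangle[of u v z] dist_triangle[of z u v]
      by (auto simp: dist_commute)
    define d where "d = dist u v"
    define b where "b = dist z u"
    define c where "c = dist v z"
    have d: "0 \<le> d" "d < pi/2" and b: "0 \<le> b" "b < pi/2" and c: "0 \<le> c" "c < pi/2"
      using dX[OF u v] dX[OF v z] dX[OF z u] by (auto simp: d_def b_def c_def)
    define a' :: "real^3" where "a' = vector [1,0,0]"
    define b' :: "real^3" where "b' = vector [cos d, sin d, 0]"
    define p' :: "real^3" where "p' = vector [cos (d/2), sin (d/2), 0]"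
    define c' :: "real^3" where "c' = vector [cos b, sin b * k, sin b * sqrt (1 - k^2)]"
    have sq: "sqrt (1 - k^2) ^ 2 = 1 - k^2" using k by (simp add: abs_square_le_1)
    have "a' \<bullet> a' = 1" "b' \<bullet> b' = 1" "p' \<bullet> p' = 1"
      by (simp_all add: a'_def b'_def p'_def inner3 power2_eq_square[symmetric])
    moreover have "c' \<bullet> c' = 1"
    proof -
      have "c' \<bullet> c' = cos b ^ 2 + sin b ^ 2 * (k^2 + sqrt (1 - k^2) ^ 2)"
        by (simp add: c'_def inner3 power2_eq_square algebra_simps)
      also have "\<dots> = 1" using sq by simp
      finally show ?thesis .
    qed
    ultimately have S: "a' \<in> S2" "b' \<in> S2" "p' \<in> S2" "c' \<in> S2" by (auto intro: S2I)
    have ab: "a' \<bullet> b' = cos d" by (simp add: a'_def b'_def inner3)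
    have ca: "c' \<bullet> a' = cos b" by (simp add: a'_def c'_def inner3)
    have bc: "b' \<bullet> c' = cos c" using k(3) by (simp add: b'_def c'_def inner3 d_def b_def c_def)
    have ap: "a' \<bullet> p' = cos (d/2)" by (simp add: a'_def p'_def inner3)
    have pb: "p' \<bullet> b' = cos (d/2)"
    proof -
      have "p' \<bullet> b' = cos d * cos (d/2) + sin d * sin (d/2)" by (simp add: p'_def b'_def inner3 mult.commute)
      also have "\<dots> = cos (d - d/2)" by (simp only: cos_diff)
      also have "cos (d - d/2) = cos (d/2)" by simp
      finally show ?thesis .
    qed
    have pc: "p' \<bullet> c' = cos (d/2) * cos b + sin (d/2) * sin b * k"
      by (simp add: p'_def c'_def inner3)
    have sd: "sdist a' b' = dist u v" using ab d by (simp add: sdist_def d_def, intro arccos_cos, auto)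
    have sc: "sdist b' c' = dist v z" using bc c by (simp add: sdist_def c_def, intro arccos_cos, auto)
    have sa: "sdist c' a' = dist z u" using ca b by (simp add: sdist_def b_def, intro arccos_cos, auto)
    have cp1: "comp_point a' b' (d/2) p'"
      using S ap pb d by (simp add: comp_point_def sdist_def ab arccos_cos)
    have cp2: "comp_point c' a' 0 c'"
      using S \<open>c' \<bullet> c' = 1\<close> by (simp add: comp_point_def sdist_def)
    have LET: "let sides = {(g, a', b', dist u v), (h1, b', c', dist v z), (h2, c', a', dist z u)}
           in \<forall>(g, u', v', l) \<in> sides. \<forall>(h, w', z', m) \<in> sides.
                \<forall>s\<in>{0..l}. \<forall>t\<in>{0..m}. \<forall>p' q'.
                  comp_point u' v' s p' \<and> comp_point w' z' t q' \<longrightarrow>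
                  dist (g s) (h t) \<le> sdist p' q'"
      using ci unfolding cat1_inequality_def using u v z g h1 h2 per S sd sc sa by blast
    have "\<forall>s\<in>{0..dist u v}. \<forall>t\<in>{0..dist z u}. \<forall>p'' q''. comp_point a' b' s p'' \<and> comp_point c' a' t q''
       \<longrightarrow> dist (g s) (h2 t) \<le> sdist p'' q''"
      using LET by (simp add: Let_def)
    hence key: "dist (g (d/2)) (h2 0) \<le> sdist p' c'"
      using cp1 cp2 d by (auto simp: d_def)
    have h20: "h2 0 = z" using h2 by (simp add: geodesic_in_def)
    have pc1: "-1 \<le> p' \<bullet> c'" "p' \<bullet> c' \<le> 1"
      using Cauchy_Schwarz_ineq2[of p' c'] S by (auto simp: S2_def abs_le_iff)
    have dm: "0 \<le> dist (g (d/2)) z" "dist (g (d/2)) z \<le> pi"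
      using dX[OF mX[folded d_def] z] pi_gt_zero zero_le_dist[of "g (d/2)" z] by linarith+
    have key': "dist (g (d/2)) z \<le> arccos (p' \<bullet> c')" using key h20 by (simp add: sdist_def)
    have "p' \<bullet> c' \<le> cos (dist (g (d/2)) z)" by (rule cos_arccos_ge[OF dm key' pc1])
    moreover have "2 * cos (d/2) * (p' \<bullet> c') = cos b + cos c"
    proof -
      have "2 * cos (d/2) * (p' \<bullet> c') = (2 * cos (d/2)^2) * cos b + (2 * sin (d/2) * cos (d/2)) * sin b * k"
        by (simp add: pc power2_eq_square algebra_simps)
      also have "\<dots> = (1 + cos d) * cos b + sin d * sin b * k"
        using cos_double_cos[of "d/2"] sin_double[of "d/2"] by simp
      also have "\<dots> = cos b + cos c" using k(3) by (simp add: d_def b_def c_def algebra_simps)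
      finally show ?thesis .
    qed
    moreover have "0 \<le> cos (d/2)" using d by (intro cos_ge_zero) auto
    ultimately have "cos b + cos c \<le> 2 * cos (d/2) * cos (dist (g (d/2)) z)"
      by (metis mult_left_mono mult_nonneg_nonneg zero_le_numeral)
    thus "cos (dist u z) + cos (dist v z) \<le> 2 * cos (dist u v / 2) * cos (dist (g (dist u v / 2)) z)"
      by (simp add: d_def b_def c_def dist_commute)
  qed
qed



definition Ls :: "(nat \<Rightarrow> real) \<Rightarrow> real" where
  "Ls f = real_of_ereal (limsup (\<lambda>n. ereal (f n)))"

lemma Ls_props:
  assumes "\<And>n. 0 \<le> f n" "\<And>n. f n \<le> B"
  shows "limsup (\<lambda>n. ereal (f n)) = ereal (Ls f)" "0 \<le> Ls f" "Ls f \<le> B"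
proof -
  have "limsup (\<lambda>n. ereal 0) \<le> limsup (\<lambda>n. ereal (f n))"
    by (rule Limsup_mono) (use assms in auto)
  hence l0: "0 \<le> limsup (\<lambda>n. ereal (f n))" by (simp add: Limsup_const zero_ereal_def)
  have "limsup (\<lambda>n. ereal (f n)) \<le> limsup (\<lambda>n. ereal B)"
    by (rule Limsup_mono) (use assms in auto)
  hence lB: "limsup (\<lambda>n. ereal (f n)) \<le> ereal B" by (simp add: Limsup_const)
  from l0 lB obtain r where r: "limsup (\<lambda>n. ereal (f n)) = ereal r"
    by (cases "limsup (\<lambda>n. ereal (f n))") auto
  show "limsup (\<lambda>n. ereal (f n)) = ereal (Ls f)" using r by (simp add: Ls_def)
  show "0 \<le> Ls f" using r l0 by (simp add: Ls_def)
  show "Ls f \<le> B" using r lB by (simp add: Ls_def)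
qed

lemma Ls_lessD:
  assumes "\<And>n. 0 \<le> f n" "\<And>n. f n \<le> B" "Ls f < t"
  shows "eventually (\<lambda>n. f n < t) sequentially"
proof -
  have "limsup (\<lambda>n. ereal (f n)) < ereal t" using Ls_props[OF assms(1,2)] assms(3) by simp
  from Limsup_lessD[OF this] show ?thesis by simp
qed

lemma less_LsD:
  assumes "\<And>n. 0 \<le> f n" "\<And>n. f n \<le> B" "t < Ls f"
  shows "\<exists>n\<ge>N. t < f n"
proof -
  have "ereal t < limsup (\<lambda>n. ereal (f n))" using Ls_props[OF assms(1,2)] assms(3) by simp
  also have "limsup (\<lambda>n. ereal (f n)) = limsup (\<lambda>n. ereal (f (n + N)))"
    using limsup_shift_k[of "\<lambda>n. ereal (f n)" N] by simp
  finally obtain i where "ereal t < ereal (f (i + N))" using Limsup_obtain by blast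
  thus ?thesis by (intro exI[of _ "i+N"]) auto
qed

lemma Ls_lim:
  assumes "f \<longlonglongrightarrow> L"
  shows "Ls f = L"
  using lim_imp_Limsup[OF trivial_limit_sequentially tendsto_ereal[OF assms]]
  by (simp add: Ls_def)

lemma Ls_mono_cos:
  assumes f: "\<And>n. 0 \<le> f n" "\<And>n. f n \<le> pi/2"
    and g: "\<And>n. 0 \<le> g n" "\<And>n. g n \<le> pi/2"
    and ev: "\<And>e. e > 0 \<Longrightarrow> eventually (\<lambda>n. cos (g n) \<le> cos (f n) + e) sequentially"
  shows "Ls f \<le> Ls g"
proof (rule ccontr)
  assume "\<not> Ls f \<le> Ls g"
  hence lt: "Ls g < Ls f" by simp
  define t1 where "t1 = Ls g + (Ls f - Ls g)/3"
  define t2 where "t2 = Ls g + 2*(Ls f - Ls g)/3"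
  have b: "0 \<le> Ls g" "Ls f \<le> pi/2" using Ls_props[OF g] Ls_props[OF f] by auto
  have t: "0 \<le> t1" "t1 < t2" "t2 \<le> pi" "Ls g < t1" "t2 < Ls f" using lt b unfolding t1_def t2_def
    by (auto simp: field_simps)
  have c: "cos t2 < cos t1" using t by (intro cos_monotone_0_pi) auto
  have e1: "eventually (\<lambda>n. g n < t1) sequentially" using Ls_lessD[OF g t(4)] .
  have e2: "eventually (\<lambda>n. cos (g n) \<le> cos (f n) + (cos t1 - cos t2)) sequentially"
    using ev c by simp
  from eventually_conj[OF e1 e2] obtain N where N: "\<And>n. n \<ge> N \<Longrightarrow> g n < t1 \<and> cos (g n) \<le> cos (f n) + (cos t1 - cos t2)"
    by (auto simp: eventually_sequentially)
  obtain n where n: "n \<ge> N" "t2 < f n" using less_LsD[OF f t(5)] by blast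
  have "cos (f n) < cos t2" using n t f[of n] by (intro cos_monotone_0_pi) auto
  moreover have "cos t1 < cos (g n)" using N[OF n(1)] t g[of n] by (intro cos_monotone_0_pi) auto
  ultimately show False using N[OF n(1)] by linarith
qed

lemma cos_lip: "\<bar>cos a - cos b\<bar> \<le> \<bar>a - b\<bar>" for a b :: real
proof -
  have "\<bar>cos a - cos b\<bar> = 2 * \<bar>sin ((a + b) / 2)\<bar> * \<bar>sin ((b - a) / 2)\<bar>"
    by (simp add: cos_diff_cos abs_mult)
  also have "\<dots> \<le> 2 * 1 * \<bar>(b - a) / 2\<bar>"
    by (intro mult_mono abs_sin_x_le_abs_x) auto
  finally show ?thesis by simp
qed

lemma Ls_ev_lower:
  assumes f: "\<And>n. 0 \<le> f n" "\<And>n. f n \<le> pi/2" and e: "e > 0"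
  shows "eventually (\<lambda>n. cos (Ls f) - e \<le> cos (f n)) sequentially"
proof -
  have b: "0 \<le> Ls f" "Ls f \<le> pi/2" using Ls_props[OF f] by auto
  have "eventually (\<lambda>n. f n < Ls f + e) sequentially" using Ls_lessD[OF f] e by simp
  then show ?thesis
  proof (rule eventually_mono)
    fix n assume n: "f n < Ls f + e"
    show "cos (Ls f) - e \<le> cos (f n)"
    proof (cases "f n \<le> Ls f")
      case True
      hence "cos (Ls f) \<le> cos (f n)" using b f[of n] by (intro cos_monotone_0_pi_le) auto
      thus ?thesis using e by linarith
    next
      case False
      thus ?thesis using cos_lip[of "Ls f" "f n"] n by linarith
    qed
  qed
qed

lemma Ls_freq_upper:
  assumes f: "\<And>n. 0 \<le> f n" "\<And>n. f n \<le> pi/2" and e: "e > 0"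
  shows "\<exists>n\<ge>N. cos (f n) \<le> cos (Ls f) + e"
proof -
  obtain n where n: "n \<ge> N" "Ls f - e < f n" using less_LsD[of f "pi/2" "Ls f - e" N, OF f] e by auto
  have b: "0 \<le> Ls f" "Ls f \<le> pi/2" using Ls_props[OF f] by auto
  have "cos (f n) \<le> cos (Ls f) + e"
  proof (cases "Ls f \<le> f n")
    case True
    hence "cos (f n) \<le> cos (Ls f)" using b f[of n] by (intro cos_monotone_0_pi_le) auto
    thus ?thesis using e by linarith
  next
    case False
    thus ?thesis using cos_lip[of "Ls f" "f n"] n by linarith
  qed
  with n show ?thesis by blast
qed

lemma Ls_lip:
  assumes f: "\<And>n. 0 \<le> f n" "\<And>n. f n \<le> B" and g: "\<And>n. 0 \<le> g n" "\<And>n. g n \<le> B"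
    and le: "\<And>n. f n \<le> g n + D"
  shows "Ls f \<le> Ls g + D"
proof (rule ccontr)
  assume nt: "\<not> Ls f \<le> Ls g + D"
  define G where "G = Ls f - Ls g - D"
  have G: "G > 0" using nt by (simp add: G_def)
  have "eventually (\<lambda>n. g n < Ls g + G/2) sequentially" using Ls_lessD[OF g] G by simp
  then obtain N where N: "\<And>n. n \<ge> N \<Longrightarrow> g n < Ls g + G/2" by (auto simp: eventually_sequentially)
  obtain n where n: "n \<ge> N" "Ls f - G/2 < f n" using less_LsD[of f B "Ls f - G/2" N, OF f] G by auto
  show False using N[OF n(1)] n(2) le[of n] G_def by linarith
qed



definition phi :: "(nat \<Rightarrow> 'a::metric_space) \<Rightarrow> 'a \<Rightarrow> real" where
  "phi y w = Ls (\<lambda>n. dist (y n) w)"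

lemma dX: "admissible X \<Longrightarrow> a\<in>X \<Longrightarrow> b\<in>X \<Longrightarrow> dist a b \<le> pi/2"
  by (auto simp: admissible_def intro: less_imp_le)

lemma phi_props:
  assumes adm: "admissible X" and y: "\<forall>n. y n \<in> X" and w: "w \<in> X"
  shows "limsup (\<lambda>n. ereal (dist (y n) w)) = ereal (phi y w)" "0 \<le> phi y w" "phi y w \<le> pi/2"
  using Ls_props[of "\<lambda>n. dist (y n) w" "pi/2"] dX[OF adm y[rule_format] w] unfolding phi_def by auto

lemma AC_char:
  assumes adm: "admissible X" and y: "\<forall>n. y n \<in> X"
  shows "asymptotic_center X y = {z\<in>X. \<forall>w\<in>X. phi y z \<le> phi y w}"
proof -
  have I: "(INF w\<in>X. limsup (\<lambda>n. ereal (dist (y n) w))) = (INF w\<in>X. ereal (phi y w))"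
    using phi_props(1)[OF adm y] by (intro INF_cong) auto
  show ?thesis
  proof (intro set_eqI iffI)
    fix z assume "z \<in> asymptotic_center X y"
    hence z: "z \<in> X" "ereal (phi y z) = (INF w\<in>X. ereal (phi y w))"
      unfolding asymptotic_center_def I using phi_props(1)[OF adm y] by auto
    have zz: "\<forall>w\<in>X. ereal (phi y z) \<le> ereal (phi y w)" unfolding z(2) by (auto intro: INF_lower)
    show "z \<in> {z\<in>X. \<forall>w\<in>X. phi y z \<le> phi y w}" using z(1) zz by auto
  next
    fix z assume "z \<in> {z\<in>X. \<forall>w\<in>X. phi y z \<le> phi y w}"
    hence z: "z \<in> X" "\<forall>w\<in>X. phi y z \<le> phi y w" by auto
    have "ereal (phi y z) = (INF w\<in>X. ereal (phi y w))"
    proof (rule antisym)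
      show "ereal (phi y z) \<le> (INF w\<in>X. ereal (phi y w))" using z(2) by (simp add: le_INF_iff)
      show "(INF w\<in>X. ereal (phi y w)) \<le> ereal (phi y z)" using z(1) by (rule INF_lower)
    qed
    thus "z \<in> asymptotic_center X y"
      unfolding asymptotic_center_def I using phi_props(1)[OF adm y z(1)] z(1) by auto
  qed
qed

lemma phi_mid:
  assumes cat: "CAT1 X" and adm: "admissible X" and y: "\<forall>n. y n \<in> X" and u: "u\<in>X" and v: "v\<in>X"
  shows "\<exists>m\<in>X. cos (phi y u) + cos (phi y v) \<le> 2*cos(dist u v/2) * cos (phi y m)"
proof -
  obtain m where m: "m\<in>X" and M: "\<And>z. z\<in>X \<Longrightarrow> cos (dist u z) + cos (dist v z) \<le> 2*cos(dist u v/2) * cos (dist m z)"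
    using midpoint_ineq[OF cat adm u v] by blast
  have d2: "- (pi/2) \<le> dist u v/2" "dist u v/2 \<le> pi/2"
    using dX[OF adm u v] zero_le_dist[of u v] pi_gt_zero by linarith+
  have C: "0 \<le> cos (dist u v/2)" "cos (dist u v/2) \<le> 1"
    using cos_ge_zero[OF d2] by auto
  have bnd: "\<And>w n. w \<in> X \<Longrightarrow> 0 \<le> dist (y n) w \<and> dist (y n) w \<le> pi/2" using dX[OF adm y[rule_format]] by auto
  have "cos (phi y u) + cos (phi y v) \<le> 2*cos(dist u v/2) * cos (phi y m) + e" if e: "e > 0" for e
  proof -
    have e4: "e/4 > 0" using e by simp
    have ev: "eventually (\<lambda>n. cos (phi y u) - e/4 \<le> cos (dist (y n) u) \<and> cos (phi y v) - e/4 \<le> cos (dist (y n) v)) sequentially"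
      using Ls_ev_lower[of "\<lambda>n. dist (y n) u", OF _ _ e4] Ls_ev_lower[of "\<lambda>n. dist (y n) v", OF _ _ e4]
        bnd[OF u] bnd[OF v] unfolding phi_def by (auto intro: eventually_conj)
    then obtain N where N: "\<And>n. n \<ge> N \<Longrightarrow> cos (phi y u) - e/4 \<le> cos (dist (y n) u) \<and> cos (phi y v) - e/4 \<le> cos (dist (y n) v)"
      by (auto simp: eventually_sequentially)
    obtain n where n: "n \<ge> N" "cos (dist (y n) m) \<le> cos (phi y m) + e/4"
      using Ls_freq_upper[of "\<lambda>n. dist (y n) m", OF _ _ e4] bnd[OF m] unfolding phi_def by blast
    have "cos (phi y u) + cos (phi y v) - e/2 \<le> cos (dist u (y n)) + cos (dist v (y n))"
      using N[OF n(1)] by (simp add: dist_commute)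
    also have "\<dots> \<le> 2*cos(dist u v/2) * cos (dist m (y n))" using M[OF y[rule_format]] .
    also have "\<dots> \<le> 2*cos(dist u v/2) * (cos (phi y m) + e/4)"
      using n(2) C by (intro mult_left_mono) (auto simp: dist_commute)
    also have "\<dots> = 2*cos(dist u v/2) * cos (phi y m) + 2*cos(dist u v/2) * (e/4)"
      by (simp add: algebra_simps)
    also have "2*cos(dist u v/2) * (e/4) \<le> 2 * 1 * (e/4)" using C e by (intro mult_right_mono) auto
    finally show ?thesis by linarith
  qed
  hence "cos (phi y u) + cos (phi y v) \<le> 2*cos(dist u v/2) * cos (phi y m)"
    by (rule field_le_epsilon)
  with m show ?thesis by blast
qed

lemma phi_lip:
  assumes adm: "admissible X" and y: "\<forall>n. y n \<in> X" and u: "u\<in>X" and w: "w\<in>X"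
  shows "phi y u \<le> phi y w + dist w u"
  unfolding phi_def
proof (rule Ls_lip[where B="pi/2"])
  fix n
  show "0 \<le> dist (y n) u" "dist (y n) u \<le> pi/2" "0 \<le> dist (y n) w" "dist (y n) w \<le> pi/2"
    using dX[OF adm y[rule_format] u, of n] dX[OF adm y[rule_format] w, of n] by auto
  show "dist (y n) u \<le> dist (y n) w + dist w u" by (rule dist_triangle)
qed

lemma cos_pos: "0 \<le> x \<Longrightarrow> x < pi/2 \<Longrightarrow> 0 < cos x"
  by (intro cos_gt_zero_pi) auto

lemma AC_unique:
  assumes cat: "CAT1 X" and adm: "admissible X" and y: "\<forall>n. y n \<in> X"
    and z1: "z1 \<in> asymptotic_center X y" and z2: "z2 \<in> asymptotic_center X y"
    and q: "q \<in> X" "phi y q < pi/2"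
  shows "z1 = z2"
proof -
  have Z1: "z1 \<in> X" "\<And>w. w\<in>X \<Longrightarrow> phi y z1 \<le> phi y w" using z1 unfolding AC_char[OF adm y] by auto
  have Z2: "z2 \<in> X" "\<And>w. w\<in>X \<Longrightarrow> phi y z2 \<le> phi y w" using z2 unfolding AC_char[OF adm y] by auto
  have eq: "phi y z1 = phi y z2" using Z1(2)[OF Z2(1)] Z2(2)[OF Z1(1)] by linarith
  obtain m where m: "m \<in> X" and M: "cos (phi y z1) + cos (phi y z2) \<le> 2*cos(dist z1 z2/2) * cos (phi y m)"
    using phi_mid[OF cat adm y Z1(1) Z2(1)] by blast
  have p1: "0 \<le> phi y z1" "phi y z1 < pi/2" using phi_props(2)[OF adm y Z1(1)] Z1(2)[OF q(1)] q(2) by linarith+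
  have c1: "0 < cos (phi y z1)" using cos_pos[OF p1] .
  have "cos (phi y m) \<le> cos (phi y z1)"
    using Z1(2)[OF m] p1 phi_props(3)[OF adm y m] pi_gt_zero by (intro cos_monotone_0_pi_le) linarith+
  have C: "0 \<le> cos(dist z1 z2/2)"
    using dX[OF adm Z1(1) Z2(1)] zero_le_dist[of z1 z2] pi_gt_zero by (intro cos_ge_zero) linarith+
  have "2*cos(dist z1 z2/2) * cos (phi y m) \<le> 2*cos(dist z1 z2/2) * cos (phi y z1)"
    using mult_left_mono[OF \<open>cos (phi y m) \<le> cos (phi y z1)\<close>, of "2*cos(dist z1 z2/2)"] C by linarith
  hence "cos (phi y z1) * 1 \<le> cos (phi y z1) * cos (dist z1 z2/2)"
    using M eq by (simp only: mult_ac)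
  hence c: "1 \<le> cos (dist z1 z2/2)" using mult_le_cancel_left_pos[OF c1] by blast
  have "\<not> 0 < dist z1 z2/2"
  proof
    assume "0 < dist z1 z2/2"
    hence "cos (dist z1 z2/2) < cos 0"
      using dX[OF adm Z1(1) Z2(1)] pi_gt_zero by (intro cos_monotone_0_pi) linarith+
    thus False using c by simp
  qed
  thus ?thesis by simp
qed

lemma AC_exists:
  assumes cat: "CAT1 X" and adm: "admissible X" and cpl: "complete X" and y: "\<forall>n. y n \<in> X"
    and q: "q \<in> X" "phi y q < pi/2"
  shows "\<exists>z. asymptotic_center X y = {z}"
proof -
  define P where "P = phi y"
  define r0 where "r0 = Inf (P ` X)"
  have ne: "P ` X \<noteq> {}" using q by auto
  have Pb: "\<And>w. w\<in>X \<Longrightarrow> 0 \<le> P w \<and> P w \<le> pi/2" using phi_props[OF adm y] by (auto simp: P_def)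
  have bdd: "bdd_below (P ` X)" using Pb by (intro bdd_belowI[where m=0]) auto
  have r0le: "\<And>w. w\<in>X \<Longrightarrow> r0 \<le> P w" unfolding r0_def using bdd by (auto intro: cInf_lower)
  have r0ge: "0 \<le> r0" unfolding r0_def using ne Pb by (auto intro: cInf_greatest)
  have r0lt: "r0 < pi/2" using r0le[OF q(1)] q(2) by (simp add: P_def)
  have cr0: "0 < cos r0" using cos_pos[OF r0ge r0lt] .
  have "\<forall>k. \<exists>w. w \<in> X \<and> P w < r0 + inverse (real (Suc k))"
  proof
    fix k
    have "Inf (P ` X) < r0 + inverse (real (Suc k))" unfolding r0_def by simp
    from cInf_lessD[OF ne this] show "\<exists>w. w \<in> X \<and> P w < r0 + inverse (real (Suc k))" by auto
  qed
  from choice[OF this] obtain u where "\<forall>k. u k \<in> X \<and> P (u k) < r0 + inverse (real (Suc k))" by blast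
  hence u: "\<And>k. u k \<in> X" "\<And>k. P (u k) < r0 + inverse (real (Suc k))" by auto
  have key: "1 - inverse (real (Suc N)) / cos r0 \<le> cos (dist (u j) (u k) / 2)" if "j \<ge> N" "k \<ge> N" for j k N
  proof -
    define \<eta> where "\<eta> = inverse (real (Suc N))"
    have "inverse (real (Suc j)) \<le> \<eta>" "inverse (real (Suc k)) \<le> \<eta>" using that
      by (auto simp: \<eta>_def field_simps)
    hence ij: "P (u j) - r0 \<le> \<eta>" "0 \<le> P (u j) - r0" "P (u k) - r0 \<le> \<eta>" "0 \<le> P (u k) - r0"
      using u(2)[of j] u(2)[of k] r0le[OF u(1)[of j]] r0le[OF u(1)[of k]] by linarith+
    have "\<bar>cos r0 - cos (P (u j))\<bar> \<le> \<eta>"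
      using cos_lip[of r0 "P (u j)"] ij by (simp add: abs_if split: if_splits)
    hence uj: "cos r0 - \<eta> \<le> cos (P (u j))" by (simp add: abs_le_iff)
    have "\<bar>cos r0 - cos (P (u k))\<bar> \<le> \<eta>"
      using cos_lip[of r0 "P (u k)"] ij by (simp add: abs_if split: if_splits)
    hence uk: "cos r0 - \<eta> \<le> cos (P (u k))" by (simp add: abs_le_iff)
    obtain m where m: "m \<in> X" and M: "cos (P (u j)) + cos (P (u k)) \<le> 2*cos(dist (u j) (u k)/2) * cos (P m)"
      using phi_mid[OF cat adm y u(1)[of j] u(1)[of k]] unfolding P_def by blast
    have "cos (P m) \<le> cos r0" using r0le[OF m] r0ge Pb[OF m] by (intro cos_monotone_0_pi_le) auto
    moreover have C: "0 \<le> cos(dist (u j) (u k)/2)"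
      using dX[OF adm u(1)[of j] u(1)[of k]] zero_le_dist[of "u j" "u k"] pi_gt_zero by (intro cos_ge_zero) linarith+
    ultimately have "2*(cos r0 - \<eta>) \<le> 2*cos(dist (u j) (u k)/2) * cos r0"
      using M uj uk mult_left_mono[OF \<open>cos (P m) \<le> cos r0\<close>, of "2*cos(dist (u j) (u k)/2)"] by simp
    hence "cos r0 * (1 - cos(dist (u j) (u k)/2)) \<le> \<eta>" by (simp add: algebra_simps)
    hence "1 - cos(dist (u j) (u k)/2) \<le> \<eta> / cos r0" using cr0 by (simp add: field_simps)
    thus ?thesis by (simp add: \<eta>_def)
  qed
  have "Cauchy u"
  proof (rule metric_CauchyI)
    fix e :: real assume e: "0 < e"
    show "\<exists>M. \<forall>m\<ge>M. \<forall>n\<ge>M. dist (u m) (u n) < e"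
    proof (cases "e \<le> pi/2")
      case False
      have "dist (u m) (u n) < e" for m n using dX[OF adm u(1)[of m] u(1)[of n]] False by linarith
      thus ?thesis by blast
    next
      case True
      have t: "0 < 1 - cos (e/2)" using cos_monotone_0_pi[of 0 "e/2"] e True pi_gt_zero by auto
      obtain N where N: "inverse (real (Suc N)) < (1 - cos (e/2)) * cos r0"
        using reals_Archimedean[of "(1 - cos (e/2)) * cos r0"] t cr0 by auto
      have "dist (u j) (u k) < e" if "j \<ge> N" "k \<ge> N" for j k
      proof -
        have "inverse (real (Suc N)) / cos r0 < 1 - cos (e/2)" by (subst pos_divide_less_eq[OF cr0]) (rule N)
        hence "cos (e/2) < cos (dist (u j) (u k) / 2)" using key[OF that] by linarith
        thus ?thesis using cos_mono_less_eq[of "e/2" "dist (u j) (u k) / 2"] e True pi_gt_zero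
          dX[OF adm u(1)[of j] u(1)[of k]] zero_le_dist[of "u j" "u k"] by auto
      qed
      thus ?thesis by blast
    qed
  qed
  then obtain l where l: "l \<in> X" "u \<longlonglongrightarrow> l" using cpl u(1) unfolding complete_def by blast
  have lim0: "(\<lambda>k. r0 + inverse (real (Suc k)) + dist (u k) l) \<longlonglongrightarrow> r0 + 0 + dist l l"
    by (intro tendsto_intros LIMSEQ_inverse_real_of_nat l(2))
  have lim: "(\<lambda>k. r0 + inverse (real (Suc k)) + dist (u k) l) \<longlonglongrightarrow> r0"
    using lim0 by simp
  have bd: "\<forall>n\<ge>0. P l \<le> r0 + inverse (real (Suc n)) + dist (u n) l"
  proof (intro allI impI)
    fix n :: nat
    show "P l \<le> r0 + inverse (real (Suc n)) + dist (u n) l"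
      using phi_lip[OF adm y l(1) u(1)[of n]] u(2)[of n] unfolding P_def by linarith
  qed
  have "P l \<le> r0" by (rule LIMSEQ_le_const[OF lim]) (use bd in blast)
  hence "\<forall>w\<in>X. phi y l \<le> phi y w" using r0le unfolding P_def by force
  hence lac: "l \<in> asymptotic_center X y" unfolding AC_char[OF adm y] using l(1) by blast
  have "asymptotic_center X y = {l}"
    using lac AC_unique[OF cat adm y _ _ q] by blast
  thus ?thesis by blast
qed



lemma fv_fix:
  assumes fv: "firmly_vicinal X T" and y: "y \<in> X" and q: "q \<in> X" "T q = q"
  shows "cos (dist y q) \<le> cos (dist (T y) y) * cos (dist (T y) q)"
proof -
  define C where "C = cos (dist (T y) y)"
  have "(C^2 * (1 + 1^2) * 1 + 1^2 * (1 + C^2) * C) * cos (dist (T y) q)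
        \<ge> C^2 * (1 + 1^2) * cos (dist (T y) q) + 1^2 * (1 + C^2) * cos (dist q y)"
  proof -
    have "let Cx = cos (dist (T y) y); Cy = cos (dist (T q) q) in
        (Cx^2 * (1 + Cy^2) * Cy + Cy^2 * (1 + Cx^2) * Cx) * cos (dist (T y) (T q))
        \<ge> Cx^2 * (1 + Cy^2) * cos (dist (T y) q) + Cy^2 * (1 + Cx^2) * cos (dist (T q) y)"
      using fv y q(1) unfolding firmly_vicinal_def by blast
    thus ?thesis unfolding Let_def C_def q(2) by simp
  qed
  hence "(1 + C^2) * cos (dist q y) \<le> (1 + C^2) * (C * cos (dist (T y) q))"
    by (simp add: algebra_simps)
  moreover have "0 < 1 + C^2" by (simp add: add_pos_nonneg)
  ultimately have "cos (dist q y) \<le> C * cos (dist (T y) q)" by simp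
  thus ?thesis by (simp add: C_def dist_commute)
qed

lemma fv_alg:
  fixes a c P Q R e :: real
  assumes a: "1/2 \<le> a" "a \<le> 1" and c: "0 < c" "c \<le> 1" and P: "0 \<le> P" "P \<le> 1"
    and PR: "P - R \<le> e" and e: "0 \<le> e"
    and FV: "a^2*(1+c^2)*Q + c^2*(1+a^2)*R \<le> (a^2*(1+c^2)*c + c^2*(1+a^2)*a) * P"
  shows "Q \<le> P + 8*e"
proof -
  define A where "A = a^2*(1+c^2)"
  define B where "B = c^2*(1+a^2)"
  have A: "1/4 \<le> A" proof -
    have "(1/2)^2 \<le> a^2" using a by (intro power_mono) auto
    hence "1/4 \<le> a^2" by (simp add: power2_eq_square)
    moreover have "1 \<le> 1 + c^2" by simp
    ultimately have "1/4 * 1 \<le> a^2 * (1+c^2)" by (intro mult_mono) auto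
    thus ?thesis by (simp add: A_def)
  qed
  have B: "0 \<le> B" "B \<le> 2"
  proof -
    show "0 \<le> B" by (simp add: B_def)
    have "c^2 \<le> 1" "1 + a^2 \<le> 2" using a c by (auto simp: power_le_one abs_square_le_1)
    thus "B \<le> 2" unfolding B_def using mult_mono[of "c^2" 1 "1+a^2" 2] by simp
  qed
  have cP: "c * P \<le> P" using c P by (simp add: mult_left_le_one_le)
  have aP: "a * P \<le> P" using a P by (simp add: mult_left_le_one_le)
  have eq: "A * Q \<le> A * (c*P) + B * (a*P - R)" using FV unfolding A_def B_def by (simp add: algebra_simps)
  have "B * (a*P - R) \<le> B * e" using B(1) aP PR by (intro mult_left_mono) auto
  also have "B * e \<le> 2 * e" using B e by (intro mult_right_mono) auto
  finally have "A * Q \<le> A * P + 2*e" using eq mult_left_mono[OF cP, of A] A by linarith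
  hence "A * (Q - P) \<le> 2 * e" by (simp add: algebra_simps)
  show ?thesis
  proof (cases "Q - P \<le> 0")
    case True thus ?thesis using e by linarith
  next
    case False
    hence "1/4 * (Q - P) \<le> A * (Q - P)" using A by (intro mult_right_mono) auto
    hence "1/4 * (Q - P) \<le> 2 * e" using \<open>A * (Q - P) \<le> 2 * e\<close> by (rule order_trans)
    thus ?thesis by (simp add: field_simps)
  qed
qed

lemma dist_diff_le: "\<bar>dist a c - dist b c\<bar> \<le> dist a b"
  using dist_triangle[of a c b] dist_triangle[of b c a] by (simp add: dist_commute abs_le_iff)

lemma fv_inst:
  assumes fv: "firmly_vicinal X T" and x: "x \<in> X" and y: "y \<in> X"
  shows "cos (dist (T x) x)^2 * (1 + cos (dist (T y) y)^2) * cos (dist (T x) y)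
       + cos (dist (T y) y)^2 * (1 + cos (dist (T x) x)^2) * cos (dist (T y) x)
      \<le> (cos (dist (T x) x)^2 * (1 + cos (dist (T y) y)^2) * cos (dist (T y) y)
         + cos (dist (T y) y)^2 * (1 + cos (dist (T x) x)^2) * cos (dist (T x) x)) * cos (dist (T x) (T y))"
proof -
  have "let Cx = cos (dist (T x) x); Cy = cos (dist (T y) y) in
        (Cx^2 * (1 + Cy^2) * Cy + Cy^2 * (1 + Cx^2) * Cx) * cos (dist (T x) (T y))
        \<ge> Cx^2 * (1 + Cy^2) * cos (dist (T x) y) + Cy^2 * (1 + Cx^2) * cos (dist (T y) x)"
    using fv x y unfolding firmly_vicinal_def by blast
  thus ?thesis unfolding Let_def by simp
qed

lemma cos_dist_lip: "cos (dist a c) - cos (dist b c) \<le> dist a b"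
proof -
  have "cos (dist a c) - cos (dist b c) \<le> \<bar>cos (dist a c) - cos (dist b c)\<bar>" by simp
  also have "\<dots> \<le> \<bar>dist a c - dist b c\<bar>" by (rule cos_lip)
  also have "\<dots> \<le> dist a b" by (rule dist_diff_le)
  finally show ?thesis .
qed

lemma AC_fix:
  assumes adm: "admissible X" and TX: "T ` X \<subseteq> X" and fv: "firmly_vicinal X T"
    and y: "\<forall>n. y n \<in> X" and reg: "(\<lambda>n. dist (T (y n)) (y n)) \<longlonglongrightarrow> 0"
    and AC: "asymptotic_center X y = {z}"
  shows "T z = z"
proof -
  have z: "z \<in> X" "\<And>w. w \<in> X \<Longrightarrow> phi y z \<le> phi y w" using AC unfolding AC_char[OF adm y] by auto
  have Tz: "T z \<in> X" using TX z(1) by auto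
  have yX: "\<And>n. y n \<in> X" using y by auto
  have TyX: "\<And>n. T (y n) \<in> X" using TX yX by auto
  have "phi y (T z) \<le> phi y z" unfolding phi_def
  proof (rule Ls_mono_cos)
    fix n
    show "0 \<le> dist (y n) (T z)" "dist (y n) (T z) \<le> pi/2" "0 \<le> dist (y n) z" "dist (y n) z \<le> pi/2"
      using dX[OF adm yX[of n] Tz] dX[OF adm yX[of n] z(1)] by auto
  next
    fix \<epsilon> :: real assume \<epsilon>: "0 < \<epsilon>"
    define en where "en = (\<lambda>n. dist (T (y n)) (y n))"
    have m: "0 < min (pi/3) (\<epsilon>/10)" using \<epsilon> pi_gt_zero by auto
    have "\<forall>e>0. eventually (\<lambda>n. dist (en n) 0 < e) sequentially"
      using reg unfolding tendsto_iff en_def by blast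
    hence "eventually (\<lambda>n. dist (en n) 0 < min (pi/3) (\<epsilon>/10)) sequentially"
      using m by blast
    thus "eventually (\<lambda>n. cos (dist (y n) z) \<le> cos (dist (y n) (T z)) + \<epsilon>) sequentially"
    proof (rule eventually_mono)
      fix n assume "dist (en n) 0 < min (pi/3) (\<epsilon>/10)"
      hence en1: "en n < pi/3" "en n < \<epsilon>/10" "0 \<le> en n" by (auto simp: en_def)
      define a where "a = cos (en n)"
      define c where "c = cos (dist (T z) z)"
      define P where "P = cos (dist (T (y n)) (T z))"
      define Q where "Q = cos (dist (T (y n)) z)"
      define R where "R = cos (dist (T z) (y n))"
      have a: "1/2 \<le> a" "a \<le> 1"
      proof -
        have "cos (pi/3) \<le> cos (en n)" using en1 by (intro cos_monotone_0_pi_le) auto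
        thus "1/2 \<le> a" by (simp add: a_def cos_60)
        show "a \<le> 1" by (simp add: a_def)
      qed
      have "dist (T z) z < pi/2" using adm Tz z(1) unfolding admissible_def by blast
      hence c: "0 < c" "c \<le> 1" using cos_pos[of "dist (T z) z"] unfolding c_def by auto
      have d1: "- (pi/2) \<le> dist (T (y n)) (T z)" "dist (T (y n)) (T z) \<le> pi/2"
        using dX[OF adm TyX[of n] Tz] zero_le_dist[of "T (y n)" "T z"] pi_gt_zero by linarith+
      have P: "0 \<le> P" "P \<le> 1"
        using cos_ge_zero[OF d1] unfolding P_def by auto
      have PR: "P - R \<le> en n"
        using cos_dist_lip[of "T (y n)" "T z" "y n"]
        unfolding P_def R_def en_def by (simp add: dist_commute)
      have FV: "a^2*(1+c^2)*Q + c^2*(1+a^2)*R \<le> (a^2*(1+c^2)*c + c^2*(1+a^2)*a) * P"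
        using fv_inst[OF fv yX[of n] z(1)] unfolding a_def c_def P_def Q_def R_def en_def .
      have QP: "Q \<le> P + 8 * en n" using fv_alg[OF a c P PR en1(3) FV] .
      have "cos (dist (y n) z) \<le> Q + en n"
        using cos_dist_lip[of "y n" z "T (y n)"]
        unfolding Q_def en_def by (simp add: dist_commute)
      moreover have "P \<le> cos (dist (y n) (T z)) + en n"
        using cos_dist_lip[of "T (y n)" "T z" "y n"]
        unfolding P_def en_def by (simp add: dist_commute)
      ultimately show "cos (dist (y n) z) \<le> cos (dist (y n) (T z)) + \<epsilon>" using QP en1 by linarith
    qed
  qed
  hence "T z \<in> asymptotic_center X y" unfolding AC_char[OF adm y] using Tz z(2) by force
  thus ?thesis using AC by blast
qed

theorem theorem4p5:
  fixes X :: "'a::metric_space set" and T :: "'a \<Rightarrow> 'a" and x :: 'a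
  assumes "CAT1 X" and "admissible X" and "complete X"
    and "T ` X \<subseteq> X" and "firmly_vicinal X T"
    and "Fix X T \<noteq> {}" and "x \<in> X"
  shows "\<exists>p\<in>Fix X T. Delta_convergent X (\<lambda>n. (T ^^ n) x) p"
proof -
  note cat = assms(1) and adm = assms(2) and cpl = assms(3) and TX = assms(4) and fv = assms(5)
    and x = assms(7)
  define xs where "xs = (\<lambda>n. (T ^^ n) x)"
  have xsS: "\<And>n. xs (Suc n) = T (xs n)" and xs0: "xs 0 = x" by (simp_all add: xs_def)
  have xsX: "\<forall>n. xs n \<in> X"
  proof
    fix n show "xs n \<in> X" by (induction n) (use x TX in \<open>auto simp: xsS xs0\<close>)
  qed
  have xsX': "\<And>n. xs n \<in> X" using xsX by auto
  obtain q where q: "q \<in> X" "T q = q" using assms(6) unfolding Fix_def by auto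
  have dlt: "\<And>a b. a \<in> X \<Longrightarrow> b \<in> X \<Longrightarrow> dist a b < pi/2" using adm unfolding admissible_def by blast
  have cpos: "\<And>a b. a \<in> X \<Longrightarrow> b \<in> X \<Longrightarrow> 0 < cos (dist a b)"
    using dlt by (intro cos_pos) auto
  have fvx: "cos (dist (xs n) p) \<le> cos (dist (xs (Suc n)) (xs n)) * cos (dist (xs (Suc n)) p)"
    if p: "p \<in> X" "T p = p" for p n
    using fv_fix[OF fv xsX'[of n] p] by (simp add: xsS)
  have dec: "dist (xs (Suc n)) p \<le> dist (xs n) p" if p: "p \<in> X" "T p = p" for p n
  proof -
    have "cos (dist (xs (Suc n)) (xs n)) * cos (dist (xs (Suc n)) p) \<le> 1 * cos (dist (xs (Suc n)) p)"
      using cpos[OF xsX'[of "Suc n"] p(1)] by (intro mult_right_mono) auto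
    hence "cos (dist (xs n) p) \<le> cos (dist (xs (Suc n)) p)" using fvx[OF p, of n] by linarith
    moreover have b: "0 \<le> dist (xs n) p" "dist (xs n) p \<le> pi" "0 \<le> dist (xs (Suc n)) p" "dist (xs (Suc n)) p \<le> pi"
      using dlt[OF xsX'[of n] p(1)] dlt[OF xsX'[of "Suc n"] p(1)] pi_gt_zero
        zero_le_dist[of "xs n" p] zero_le_dist[of "xs (Suc n)" p] by linarith+
    ultimately show ?thesis using cos_mono_le_eq[OF b] by simp
  qed
  define L where "L = (\<lambda>p. lim (\<lambda>n. dist (xs n) p))"
  have Lc: "(\<lambda>n. dist (xs n) p) \<longlonglongrightarrow> L p \<and> L p \<le> dist x p" if p: "p \<in> X" "T p = p" for p
  proof -
    have "decseq (\<lambda>n. dist (xs n) p)" unfolding decseq_Suc_iff using dec[OF p] by auto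
    then obtain L' where L': "(\<lambda>n. dist (xs n) p) \<longlonglongrightarrow> L'" "\<forall>i. L' \<le> dist (xs i) p"
      using decseq_convergent[of "\<lambda>n. dist (xs n) p" 0] by auto
    have "L p = L'" unfolding L_def using L'(1) by (rule limI)
    thus ?thesis using L' xs0 by (metis)
  qed
  have Lq: "L q < pi/2" using Lc[OF q] dlt[OF x q(1)] by linarith
  have Lq0: "0 \<le> L q" using Lc[OF q] by (intro LIMSEQ_le_const[of "\<lambda>n. dist (xs n) q"]) auto
  have reg: "(\<lambda>n. dist (T (xs n)) (xs n)) \<longlonglongrightarrow> 0"
  proof -
    define a where "a = (\<lambda>n. dist (xs n) q)"
    have cL: "0 < cos (L q)" using cos_pos[OF Lq0 Lq] .
    have t1: "(\<lambda>n. cos (a n)) \<longlonglongrightarrow> cos (L q)" unfolding a_def using Lc[OF q] by (intro tendsto_intros) auto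
    have t2: "(\<lambda>n. cos (a (Suc n))) \<longlonglongrightarrow> cos (L q)" using LIMSEQ_Suc[OF t1] .
    have rat: "(\<lambda>n. cos (a n) / cos (a (Suc n))) \<longlonglongrightarrow> cos (L q) / cos (L q)"
      using cL by (intro tendsto_divide t1 t2) auto
    hence rat1: "(\<lambda>n. cos (a n) / cos (a (Suc n))) \<longlonglongrightarrow> 1" using cL by simp
    have low: "cos (a n) / cos (a (Suc n)) \<le> cos (dist (T (xs n)) (xs n))" for n
    proof -
      have "0 < cos (a (Suc n))" unfolding a_def using cpos[OF xsX'[of "Suc n"] q(1)] .
      thus ?thesis using fvx[OF q, of n] unfolding a_def by (simp add: divide_le_eq xsS)
    qed
    show ?thesis unfolding tendsto_iff
    proof (intro allI impI)
      fix \<epsilon> :: real assume \<epsilon>: "0 < \<epsilon>"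
      define \<epsilon>' where "\<epsilon>' = min \<epsilon> (pi/2)"
      have e': "0 < \<epsilon>'" "\<epsilon>' \<le> pi/2" "\<epsilon>' \<le> \<epsilon>" using \<epsilon> pi_gt_zero by (auto simp: \<epsilon>'_def)
      have "cos \<epsilon>' < cos 0" using e' pi_gt_zero by (intro cos_monotone_0_pi) auto
      hence "cos \<epsilon>' < 1" by simp
      hence "eventually (\<lambda>n. cos \<epsilon>' < cos (a n) / cos (a (Suc n))) sequentially"
        using order_tendstoD(1)[OF rat1] by blast
      thus "eventually (\<lambda>n. dist (dist (T (xs n)) (xs n)) 0 < \<epsilon>) sequentially"
      proof (rule eventually_mono)
        fix n assume "cos \<epsilon>' < cos (a n) / cos (a (Suc n))"
        hence "cos \<epsilon>' < cos (dist (T (xs n)) (xs n))" using low[of n] by linarith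
        moreover have "T (xs n) \<in> X" using TX xsX' by auto
        hence b: "0 \<le> \<epsilon>'" "\<epsilon>' \<le> pi" "0 \<le> dist (T (xs n)) (xs n)" "dist (T (xs n)) (xs n) \<le> pi"
          using e' dlt[OF _ xsX'[of n], of "T (xs n)"] pi_gt_zero zero_le_dist[of "T (xs n)" "xs n"] by linarith+
        ultimately have "dist (T (xs n)) (xs n) < \<epsilon>'" using cos_mono_less_eq[OF b] by simp
        thus "dist (dist (T (xs n)) (xs n)) 0 < \<epsilon>" using e' by simp
      qed
    qed
  qed
  have sub: "(\<exists>z. asymptotic_center X (xs \<circ> r) = {z} \<and> z \<in> X \<and> T z = z)
      \<and> (\<forall>p. p \<in> X \<and> T p = p \<longrightarrow> phi (xs \<circ> r) p = L p)" if r: "strict_mono r" for r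
  proof -
    have yX: "\<forall>n. (xs \<circ> r) n \<in> X" using xsX by simp
    have ph: "phi (xs \<circ> r) p = L p" if p: "p \<in> X" "T p = p" for p
    proof -
      have "((\<lambda>n. dist (xs n) p) \<circ> r) \<longlonglongrightarrow> L p" using LIMSEQ_subseq_LIMSEQ[OF conjunct1[OF Lc[OF p]] r] .
      hence "(\<lambda>n. dist ((xs \<circ> r) n) p) \<longlonglongrightarrow> L p" by (simp add: o_def)
      thus ?thesis unfolding phi_def by (rule Ls_lim)
    qed
    have "phi (xs \<circ> r) q < pi/2" using ph[OF q] Lq by linarith
    from AC_exists[OF cat adm cpl yX q(1) this] obtain z where z: "asymptotic_center X (xs \<circ> r) = {z}"
      by blast
    have zX: "z \<in> X" using z unfolding AC_char[OF adm yX] by auto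
    have regr: "(\<lambda>n. dist (T ((xs \<circ> r) n)) ((xs \<circ> r) n)) \<longlonglongrightarrow> 0"
      using LIMSEQ_subseq_LIMSEQ[OF reg r] by (simp add: o_def)
    have "T z = z" using AC_fix[OF adm TX fv yX regr z] .
    thus ?thesis using z zX ph by blast
  qed
  obtain z0 where z0: "asymptotic_center X (xs \<circ> id) = {z0}" "z0 \<in> X" "T z0 = z0"
    using sub[OF strict_mono_id] by blast
  have yid: "\<forall>n. (xs \<circ> id) n \<in> X" using xsX by simp
  have "z0 \<in> {z\<in>X. \<forall>w\<in>X. phi (xs \<circ> id) z \<le> phi (xs \<circ> id) w}"
    using z0(1) AC_char[OF adm yid] by blast
  hence z0min: "\<And>w. w \<in> X \<Longrightarrow> phi (xs \<circ> id) z0 \<le> phi (xs \<circ> id) w" by blast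
  have "Delta_convergent X xs z0"
    unfolding Delta_convergent_def
  proof (intro allI impI)
    fix r :: "nat \<Rightarrow> nat" assume r: "strict_mono r"
    have yX: "\<forall>n. (xs \<circ> r) n \<in> X" using xsX by simp
    obtain zr where zr: "asymptotic_center X (xs \<circ> r) = {zr}" "zr \<in> X" "T zr = zr"
      using sub[OF r] by blast
    have zrmin: "\<And>w. w \<in> X \<Longrightarrow> phi (xs \<circ> r) zr \<le> phi (xs \<circ> r) w"
      using zr(1) unfolding AC_char[OF adm yX] by auto
    have "phi (xs \<circ> r) z0 = L z0" using sub[OF r] z0 by blast
    also have "L z0 = phi (xs \<circ> id) z0" using sub[OF strict_mono_id] z0 by metis
    also have "\<dots> \<le> phi (xs \<circ> id) zr" using z0min[OF zr(2)] .
    also have "\<dots> = L zr" using sub[OF strict_mono_id] zr by blast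
    also have "\<dots> = phi (xs \<circ> r) zr" using sub[OF r] zr by metis
    finally have "phi (xs \<circ> r) z0 \<le> phi (xs \<circ> r) zr" .
    hence "z0 \<in> asymptotic_center X (xs \<circ> r)"
      unfolding AC_char[OF adm yX] using z0(2) zrmin by force
    thus "asymptotic_center X (xs \<circ> r) = {z0}" using zr(1) by auto
  qed
  moreover have "z0 \<in> Fix X T" using z0 by (simp add: Fix_def)
  ultimately show ?thesis unfolding xs_def by blast
qed


end
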